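(* Let $\mathbf v\in\mathbb N_0^d$ and let $P(\mathbf x,t)=\sum_{\mathbf k\le\mathbf v}p_{\mathbf k}(t)\mathbf x^{\mathbf k}$, where $p_{\mathbf k}:[0,\infty)\to\mathbb R$. Then $P$ is time-space harmonic with respect to $\{t\cdot\boldsymbol\mu\}_{t\ge0}$ if and only if, for all $t\ge0$ and all $\mathbf k\le\mathbf v$, $$p_{\mathbf k}(t)=\sum_{\mathbf k\le\mathbf i\le\mathbf v}\binom{\mathbf i}{\mathbf k}\,p_{\mathbf i}(0)\,m_{\mathbf i-\mathbf k}(-t).$$ Equivalently, $P$ is time-space harmonic if and only if $P(\mathbf x,t)=\sum_{\mathbf k\le\mathbf v}p_{\mathbf k}(0)\,Q_{\mathbf k}(\mathbf x,t)$ for all $t\ge0$; in particular every time-space harmonic polynomial is a linear combination of the $Q_{\mathbf k}$.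
   Context: Fix $d\ge1$. Multi-index notation: for $\mathbf v\in\mathbb N_0^d$, $\mathbf v!=\prod_i v_i!$, $\mathbf x^{\mathbf v}=\prod_i x_i^{v_i}$; $\mathbf k\le\mathbf v$ means $k_i\le v_i$ for all $i$; $\binom{\mathbf v}{\mathbf k}=\prod_i\binom{v_i}{k_i}$. Let $\boldsymbol\mu$ be a $d$-tuple of umbral monomials with multivariate moments $g_{\mathbf v}=E[\boldsymbol\mu^{\mathbf v}]$, $g_{\mathbf 0}=1$, and generating function $f(\boldsymbol\mu,\mathbf z)=\sum_{\mathbf v}g_{\mathbf v}\mathbf z^{\mathbf v}/\mathbf v!$ (formal power series). For $t\in\mathbb R$, $t\cdot\boldsymbol\mu$ is the auxiliary umbral $d$-tuple with moments $m_{\mathbf v}(t)=E[(t\cdot\boldsymbol\mu)^{\mathbf v}]$ defined by $\sum_{\mathbf v}m_{\mathbf v}(t)\mathbf z^{\mathbf v}/\mathbf v!=f(\boldsymbol\mu,\mathbf z)^t=\exp(t\log f(\boldsymbol\mu,\mathbf z))$. $Q_{\mathbf k}(\mathbf x,t)=E[(\mathbf x-t\cdot\boldsymbol\mu)^{\mathbf k}]=\sum_{\mathbf i\le\mathbf k}\binom{\mathbf k}{\mathbf i}\mathbf x^{\mathbf k-\mathbf i}m_{\mathbf i}(-t)$. Time-space harmonicity: the conditional evaluation given $s\cdot\boldsymbol\mu$ is defined by linearity from $E[(t\cdot\boldsymbol\mu)^{\mathbf k}\mid s\cdot\boldsymbol\mu]=\sum_{\mathbf j\le\mathbf k}\binom{\mathbf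 k}{\mathbf j}(s\cdot\boldsymbol\mu)^{\mathbf j}m_{\mathbf k-\mathbf j}(t-s)$. $P(\mathbf x,t)=\sum_{\mathbf k\le\mathbf v}p_{\mathbf k}(t)\mathbf x^{\mathbf k}$ is time-space harmonic with respect to $\{t\cdot\boldsymbol\mu\}_{t\ge0}$ if $E[P(t\cdot\boldsymbol\mu,t)\mid s\cdot\boldsymbol\mu]=P(s\cdot\boldsymbol\mu,s)$ for all $0\le s\le t$, equality meaning equality of coefficients of each $(s\cdot\boldsymbol\mu)^{\mathbf j}$; explicitly: for all $0\le s\le t$ and all $\mathbf j\le\mathbf v$, $\sum_{\mathbf j\le\mathbf k\le\mathbf v}p_{\mathbf k}(t)\binom{\mathbf k}{\mathbf j}m_{\mathbf k-\mathbf j}(t-s)=p_{\mathbf j}(s)$. *)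

theory Defs
  imports Complex_Main
begin

text \<open>Multi-indices in N_0^d are functions 'd \<Rightarrow> nat for a finite type 'd
  (d = CARD('d) \<ge> 1).  The order on multi-indices is the pointwise order of
  functions; mi_sub v k is the pointwise difference (only used when k \<le> v).\<close>

definition mi_fact :: "('d::finite \<Rightarrow> nat) \<Rightarrow> real" where
  "mi_fact v = (\<Prod>i\<in>UNIV. fact (v i))"

definition mi_choose :: "('d::finite \<Rightarrow> nat) \<Rightarrow> ('d \<Rightarrow> nat) \<Rightarrow> real" where
  "mi_choose v k = (\<Prod>i\<in>UNIV. real (v i choose k i))"

definition mi_pow :: "('d::finite \<Rightarrow> real) \<Rightarrow> ('d \<Rightarrow> nat) \<Rightarrow> real" where
  "mi_pow x v = (\<Prod>i\<in>UNIV. x i ^ v i)"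

definition mi_size :: "('d::finite \<Rightarrow> nat) \<Rightarrow> nat" where
  "mi_size v = (\<Sum>i\<in>UNIV. v i)"

definition mi_sub :: "('d \<Rightarrow> nat) \<Rightarrow> ('d \<Rightarrow> nat) \<Rightarrow> 'd \<Rightarrow> nat" where
  "mi_sub v k = (\<lambda>i. v i - k i)"

text \<open>Multivariate formal power series in z_1..z_d over the reals, represented by
  their (ordinary) coefficient functions: a \<leftrightarrow> \<Sum>_v a v z^v.\<close>

definition ps_one :: "('d::finite \<Rightarrow> nat) \<Rightarrow> real" where
  "ps_one v = (if v = (\<lambda>_. 0) then 1 else 0)"

definition ps_mult :: "(('d::finite \<Rightarrow> nat) \<Rightarrow> real) \<Rightarrow> (('d \<Rightarrow> nat) \<Rightarrow> real) \<Rightarrow> ('d \<Rightarrow> nat) \<Rightarrow> real" where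
  "ps_mult a b v = (\<Sum>k\<in>{k. k \<le> v}. a k * b (mi_sub v k))"

fun ps_pow :: "(('d::finite \<Rightarrow> nat) \<Rightarrow> real) \<Rightarrow> nat \<Rightarrow> ('d \<Rightarrow> nat) \<Rightarrow> real" where
  "ps_pow a 0 = ps_one"
| "ps_pow a (Suc n) = ps_mult a (ps_pow a n)"

text \<open>Formal logarithm of a series with constant term 1:
  log a = \<Sum>_{n\<ge>1} (-1)^(n+1) (a - 1)^n / n.  Since (a-1)^n has no terms of total
  degree < n, the coefficient of z^v only receives contributions from n \<le> |v|,
  so the truncated sum below is exactly the coefficient of the full series.\<close>

definition ps_log :: "(('d::finite \<Rightarrow> nat) \<Rightarrow> real) \<Rightarrow> ('d \<Rightarrow> nat) \<Rightarrow> real" where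
  "ps_log a v = (\<Sum>n\<in>{1..mi_size v}.
      (-1) ^ (n + 1) / real n * ps_pow (\<lambda>w. a w - ps_one w) n v)"

text \<open>Formal exponential of a series with constant term 0:
  exp h = \<Sum>_{n\<ge>0} h^n / n!; again only n \<le> |v| contribute to the coefficient of z^v.\<close>

definition ps_exp :: "(('d::finite \<Rightarrow> nat) \<Rightarrow> real) \<Rightarrow> ('d \<Rightarrow> nat) \<Rightarrow> real" where
  "ps_exp h v = (\<Sum>n\<in>{0..mi_size v}. ps_pow h n v / fact n)"

text \<open>Moments m_v(t) of t\<cdot>\<mu>, where g are the moments of \<mu> (g 0 = 1):
  \<Sum>_v m_v(t) z^v / v! = exp(t log f(\<mu>,z)),  f(\<mu>,z) = \<Sum>_v g_v z^v / v!.\<close>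

definition umb_moment :: "(('d::finite \<Rightarrow> nat) \<Rightarrow> real) \<Rightarrow> real \<Rightarrow> ('d \<Rightarrow> nat) \<Rightarrow> real" where
  "umb_moment g t v =
     mi_fact v * ps_exp (\<lambda>w. t * ps_log (\<lambda>u. g u / mi_fact u) w) v"

text \<open>Q_k(x,t) = E[(x - t\<cdot>\<mu>)^k] = \<Sum>_{i\<le>k} C(k,i) x^(k-i) m_i(-t).\<close>

definition Q_poly :: "(('d::finite \<Rightarrow> nat) \<Rightarrow> real) \<Rightarrow> ('d \<Rightarrow> nat) \<Rightarrow> ('d \<Rightarrow> real) \<Rightarrow> real \<Rightarrow> real" where
  "Q_poly g k x t = (\<Sum>i\<in>{i. i \<le> k}. mi_choose k i * mi_pow x (mi_sub k i) * umb_moment g (-t) i)"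

text \<open>Time-space harmonicity of P(x,t) = \<Sum>_{k\<le>v} p_k(t) x^k, as an equality of
  coefficients of each (s\<cdot>\<mu>)^j.\<close>

definition tsh :: "(('d::finite \<Rightarrow> nat) \<Rightarrow> real) \<Rightarrow> ('d \<Rightarrow> nat) \<Rightarrow> (('d \<Rightarrow> nat) \<Rightarrow> real \<Rightarrow> real) \<Rightarrow> bool" where
  "tsh g v p \<longleftrightarrow> (\<forall>s t. 0 \<le> s \<and> s \<le> t \<longrightarrow> (\<forall>j. j \<le> v \<longrightarrow>
     (\<Sum>k\<in>{k. j \<le> k \<and> k \<le> v}. p k t * mi_choose k j * umb_moment g (t - s) (mi_sub k j)) = p j s))"

definition P_poly :: "('d::finite \<Rightarrow> nat) \<Rightarrow> (('d \<Rightarrow> nat) \<Rightarrow> real \<Rightarrow> real) \<Rightarrow> ('d \<Rightarrow> real) \<Rightarrow> real \<Rightarrow> real" where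
  "P_poly v p x t = (\<Sum>k\<in>{k. k \<le> v}. p k t * mi_pow x k)"

end

theory Submission
  imports Defs "HOL-Library.FuncSet"
begin

lemma fin_le: "finite {k::'d::finite\<Rightarrow>nat. k \<le> v}"
proof (rule finite_subset[of _ "PiE UNIV (\<lambda>i. {..v i}) :: ('d \<Rightarrow> nat) set"])
  show "{k::'d\<Rightarrow>nat. k \<le> v} \<subseteq> PiE UNIV (\<lambda>i. {..v i})"
    by (auto simp: le_fun_def PiE_def extensional_def)
qed (simp add: finite_PiE)

lemma fin_iv: "finite {k::'d::finite\<Rightarrow>nat. a \<le> k \<and> k \<le> v}"
  by (rule finite_subset[OF _ fin_le[of v]]) auto

lemma le_add_sub: "k \<le> v \<Longrightarrow> j \<le> mi_sub v k \<Longrightarrow> (\<lambda>i. k i + j i) \<le> (v::'d\<Rightarrow>nat)"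
  by (simp add: le_fun_def mi_sub_def) (metis add.commute le_diff_conv2)
lemma add_sub_eq: "k \<le> m \<Longrightarrow> (\<lambda>i. k i + mi_sub m k i) = (m::'d\<Rightarrow>nat)"
  by (simp add: le_fun_def mi_sub_def fun_eq_iff)
lemma sub_mono: "m \<le> v \<Longrightarrow> mi_sub m k \<le> mi_sub (v::'d\<Rightarrow>nat) k"
  by (simp add: le_fun_def mi_sub_def diff_le_mono)
lemma le_add1: "k \<le> (\<lambda>i. k i + j i :: nat)"
  by (simp add: le_fun_def)

lemma sub_add: "mi_sub (\<lambda>i. k i + j i) k = (j::'d\<Rightarrow>nat)"
  by (auto simp: mi_sub_def fun_eq_iff)

lemma reidx: 
  fixes k v :: "'d::finite \<Rightarrow> nat"
  assumes "k \<le> v"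
  shows "(\<Sum>j\<in>{j. j \<le> mi_sub v k}. f (\<lambda>i. k i + j i)) = (\<Sum>m\<in>{m. k \<le> m \<and> m \<le> v}. f m)"
  by (rule sum.reindex_bij_witness[where i="\<lambda>m. mi_sub m k" and j="\<lambda>j i. k i + j i"])
     (use assms in \<open>auto simp: le_add_sub add_sub_eq sub_mono le_add1 sub_add\<close>)

lemma sub_sub: "k \<le> m \<Longrightarrow> m \<le> (v::'d\<Rightarrow>nat) \<Longrightarrow> mi_sub (mi_sub v k) (mi_sub m k) = mi_sub v m"
  by (auto simp: le_fun_def mi_sub_def fun_eq_iff)

lemma ps_mult_assoc: "ps_mult a (ps_mult b c) v = ps_mult (ps_mult a b) c v"
proof -
  have "ps_mult a (ps_mult b c) v = (\<Sum>k\<in>{k. k \<le> v}. a k * (\<Sum>m\<in>{m. k \<le> m \<and> m \<le> v}. b (mi_sub m k) * c (mi_sub v m)))"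
    unfolding ps_mult_def[of a]
  proof (rule sum.cong[OF refl])
    fix k assume k: "k \<in> {k. k \<le> v}"
    have "ps_mult b c (mi_sub v k) = (\<Sum>j\<in>{j. j \<le> mi_sub v k}. b (mi_sub (\<lambda>i. k i + j i) k) * c (mi_sub (mi_sub v k) (mi_sub (\<lambda>i. k i + j i) k)))"
      unfolding ps_mult_def sub_add ..
    also have "\<dots> = (\<Sum>m\<in>{m. k \<le> m \<and> m \<le> v}. b (mi_sub m k) * c (mi_sub (mi_sub v k) (mi_sub m k)))"
      by (rule reidx[where f="\<lambda>m. b (mi_sub m k) * c (mi_sub (mi_sub v k) (mi_sub m k))"]) (use k in simp)
    also have "\<dots> = (\<Sum>m\<in>{m. k \<le> m \<and> m \<le> v}. b (mi_sub m k) * c (mi_sub v m))"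
      by (rule sum.cong) (auto simp: sub_sub)
    finally show "a k * ps_mult b c (mi_sub v k) = a k * (\<Sum>m\<in>{m. k \<le> m \<and> m \<le> v}. b (mi_sub m k) * c (mi_sub v m))"
      by simp
  qed
  also have "\<dots> = (\<Sum>k\<in>{k. k \<le> v}. \<Sum>m\<in>{m. m \<in> {m. m \<le> v} \<and> k \<le> m}. a k * (b (mi_sub m k) * c (mi_sub v m)))"
    by (auto simp: sum_distrib_left intro!: sum.cong)
  also have "\<dots> = (\<Sum>m\<in>{m. m \<le> v}. \<Sum>k\<in>{k. k \<in> {k. k \<le> v} \<and> k \<le> m}. a k * (b (mi_sub m k) * c (mi_sub v m)))"
    by (rule sum.swap_restrict[OF fin_le fin_le])
  also have "\<dots> = ps_mult (ps_mult a b) c v"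
    unfolding ps_mult_def
    by (auto simp: sum_distrib_right mult.assoc intro!: sum.cong)
  finally show ?thesis .
qed

lemma ps_pow_add: "ps_pow h (a + b) = ps_mult (ps_pow h a) (ps_pow h b)"
proof (induction a)
  case 0
  show ?case
  proof
    fix v :: "'a \<Rightarrow> nat"
    have "ps_mult ps_one (ps_pow h b) v = (\<Sum>k\<in>{k. k \<le> v}. (if k = (\<lambda>_. 0) then ps_pow h b (mi_sub v k) else 0))"
      unfolding ps_mult_def ps_one_def by (rule sum.cong) (auto simp:)
    also have "\<dots> = ps_pow h b v" by (subst sum.delta[OF fin_le]) (simp add: mi_sub_def le_fun_def)
    finally show "ps_pow h (0 + b) v = ps_mult (ps_pow h 0) (ps_pow h b) v" by simp
  qed
next
  case (Suc a)
  show ?case by (auto simp: fun_eq_iff Suc ps_mult_assoc)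
qed

lemma size_sub: "k \<le> w \<Longrightarrow> mi_size (mi_sub w k) + mi_size k = mi_size (w::'d::finite\<Rightarrow>nat)"
  unfolding mi_size_def mi_sub_def sum.distrib[symmetric]
  by (rule sum.cong) (auto simp: le_fun_def)

lemma size_pos: "k \<noteq> (\<lambda>_. 0) \<Longrightarrow> 0 < mi_size (k::'d::finite\<Rightarrow>nat)"
proof -
  assume "k \<noteq> (\<lambda>_. 0)"
  then obtain i where "k i \<noteq> 0" by auto
  moreover have "k i \<le> mi_size k" unfolding mi_size_def by (rule member_le_sum) auto
  ultimately show ?thesis by linarith
qed

lemma size_mono: "k \<le> w \<Longrightarrow> mi_size k \<le> mi_size (w::'d::finite\<Rightarrow>nat)"
  unfolding mi_size_def by (rule sum_mono) (auto simp: le_fun_def)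

lemma pow_vanish: "h (\<lambda>_. 0) = 0 \<Longrightarrow> mi_size w < n \<Longrightarrow> ps_pow h n (w::'d::finite\<Rightarrow>nat) = 0"
proof (induction n arbitrary: w)
  case 0 then show ?case by simp
next
  case (Suc n)
  have "h k * ps_pow h n (mi_sub w k) = 0" if k: "k \<le> w" for k
  proof (cases "k = (\<lambda>_. 0)")
    case True then show ?thesis using Suc.prems by simp
  next
    case False
    have "mi_size (mi_sub w k) < n" using size_sub[OF k] size_pos[OF False] Suc.prems by linarith
    then show ?thesis using Suc.IH Suc.prems by simp
  qed
  then show ?case by (auto simp: ps_mult_def intro!: sum.neutral)
qed

lemma pow_scale: "ps_pow (\<lambda>w. t * h w) n v = t ^ n * ps_pow h n v"
proof (induction n arbitrary: v)
  case 0 then show ?case by simp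
next
  case (Suc n) then show ?case
    by (simp add: ps_mult_def sum_distrib_left mult_ac)
qed

lemma exp_sum: 
  assumes h0: "h (\<lambda>_. 0) = 0" and N: "mi_size w \<le> N"
  shows "ps_exp (\<lambda>w. t * h w) (w::'d::finite\<Rightarrow>nat) = (\<Sum>n\<le>N. t ^ n * ps_pow h n w / fact n)"
  unfolding ps_exp_def pow_scale
proof (rule sum.mono_neutral_left)
  show "\<forall>i\<in>{..N} - {0..mi_size w}. t ^ i * ps_pow h i w / fact i = 0"
    using pow_vanish[where h=h, OF h0] by auto
qed (use N in auto)

lemma ps_mult_cong: "(\<And>k. k \<le> v \<Longrightarrow> a k = a' k) \<Longrightarrow> (\<And>k. k \<le> v \<Longrightarrow> b k = b' k) \<Longrightarrow>
   ps_mult a b v = ps_mult a' b' (v::'d::finite\<Rightarrow>nat)"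
  unfolding ps_mult_def by (rule sum.cong) (auto simp: sub_mono[of _ v, of "\<lambda>_. 0" ] le_fun_def mi_sub_def)

lemma ps_mult_sums: "ps_mult (\<lambda>k. \<Sum>a\<in>A. f a k) (\<lambda>k. \<Sum>b\<in>B. g b k) v
   = (\<Sum>a\<in>A. \<Sum>b\<in>B. ps_mult (f a) (g b) (v::'d::finite\<Rightarrow>nat))"
proof -
  have "ps_mult (\<lambda>k. \<Sum>a\<in>A. f a k) (\<lambda>k. \<Sum>b\<in>B. g b k) v
     = (\<Sum>k\<in>{k. k \<le> v}. \<Sum>a\<in>A. \<Sum>b\<in>B. f a k * g b (mi_sub v k))"
    unfolding ps_mult_def by (simp add: sum_product)
  also have "\<dots> = (\<Sum>a\<in>A. \<Sum>k\<in>{k. k \<le> v}. \<Sum>b\<in>B. f a k * g b (mi_sub v k))"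
    by (rule sum.swap)
  also have "\<dots> = (\<Sum>a\<in>A. \<Sum>b\<in>B. \<Sum>k\<in>{k. k \<le> v}. f a k * g b (mi_sub v k))"
    by (rule sum.cong[OF refl], rule sum.swap)
  finally show ?thesis unfolding ps_mult_def .
qed

lemma exp_semigroup:
  assumes h0: "h (\<lambda>_. 0) = 0"
  shows "ps_mult (ps_exp (\<lambda>w. s * h w)) (ps_exp (\<lambda>w. t * h w)) v = ps_exp (\<lambda>w. (s + t) * h w) (v::'d::finite\<Rightarrow>nat)"
proof -
  define N where "N = mi_size v"
  define c where "c a b = s ^ a * t ^ b / (fact a * fact b)" for a b :: nat
  define f where "f a b = c a b * ps_pow h (a + b) v" for a b
  have "ps_mult (ps_exp (\<lambda>w. s * h w)) (ps_exp (\<lambda>w. t * h w)) v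
     = ps_mult (\<lambda>k. \<Sum>a\<le>N. s ^ a * ps_pow h a k / fact a) (\<lambda>k. \<Sum>b\<le>N. t ^ b * ps_pow h b k / fact b) v"
    by (rule ps_mult_cong; rule exp_sum[where h=h, OF h0]) (auto simp: N_def size_mono)
  also have "\<dots> = (\<Sum>a\<le>N. \<Sum>b\<le>N. ps_mult (\<lambda>k. s ^ a * ps_pow h a k / fact a) (\<lambda>k. t ^ b * ps_pow h b k / fact b) v)"
    by (rule ps_mult_sums)
  also have "\<dots> = (\<Sum>a\<le>N. \<Sum>b\<le>N. f a b)"
  proof (intro sum.cong refl)
    fix a b
    have "ps_mult (\<lambda>k. s ^ a * ps_pow h a k / fact a) (\<lambda>k. t ^ b * ps_pow h b k / fact b) v
        = c a b * ps_mult (ps_pow h a) (ps_pow h b) v"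
      unfolding ps_mult_def c_def by (simp add: sum_distrib_left field_simps)
    then show "ps_mult (\<lambda>k. s ^ a * ps_pow h a k / fact a) (\<lambda>k. t ^ b * ps_pow h b k / fact b) v = f a b"
      by (simp add: f_def ps_pow_add)
  qed
  also have "\<dots> = (\<Sum>(a,b)\<in>{..N} \<times> {..N}. f a b)"
    by (simp add: sum.cartesian_product)
  also have "\<dots> = (\<Sum>(a,b)\<in>{(a,b). a + b \<le> N}. f a b)"
  proof (rule sum.mono_neutral_right)
    show "\<forall>x\<in>{..N} \<times> {..N} - {(a, b). a + b \<le> N}. (case x of (a, b) \<Rightarrow> f a b) = 0"
      using pow_vanish[where h=h, OF h0] by (auto simp: f_def N_def) (meson not_le)
  qed auto
  also have "\<dots> = (\<Sum>n\<le>N. \<Sum>a\<le>n. f a (n - a))"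
    by (rule sum.triangle_reindex_eq)
  also have "\<dots> = (\<Sum>n\<le>N. (s + t) ^ n * ps_pow h n v / fact n)"
  proof (rule sum.cong[OF refl])
    fix n assume "n \<in> {..N}"
    have "(s + t) ^ n / fact n = (\<Sum>a\<le>n. c a (n - a))"
      unfolding binomial_ring c_def sum_divide_distrib
      by (rule sum.cong[OF refl]) (simp add: binomial_fact)
    moreover have "(\<Sum>a\<le>n. f a (n - a)) = (\<Sum>a\<le>n. c a (n - a)) * ps_pow h n v"
      by (simp add: f_def sum_distrib_right)
    ultimately show "(\<Sum>a\<le>n. f a (n - a)) = (s + t) ^ n * ps_pow h n v / fact n"
      by (metis times_divide_eq_left mult.commute)
  qed
  also have "\<dots> = ps_exp (\<lambda>w. (s + t) * h w) v"
    by (rule exp_sum[where h=h, OF h0, symmetric]) (simp add: N_def)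
  finally show ?thesis .
qed

lemma log0: "ps_log a (\<lambda>_. 0::nat) = 0"
  by (simp add: ps_log_def mi_size_def)

lemma fact0: "mi_fact (\<lambda>_. 0::nat) = 1"
  by (simp add: mi_fact_def)

lemma mom_zero: "umb_moment g 0 w = (if w = (\<lambda>_. 0) then 1 else 0)"
proof -
  have "ps_exp (\<lambda>w. 0 * ps_log (\<lambda>u. g u / mi_fact u) w) w = ps_one w"
    unfolding ps_exp_def pow_scale
    by (subst sum.remove[of _ 0]) (auto simp: power_0_left)
  then show ?thesis by (simp add: umb_moment_def ps_one_def fact0)
qed

lemma coord_id: 
  assumes "j \<le> i" "i \<le> (l::nat)"
  shows "real (l choose i) * real (i choose j) * (fact (i - j) * fact (l - i)) = real (l choose j) * fact (l - j)"
proof -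
  have A: "fact i * fact (l - i) * real (l choose i) = fact l" using assms binomial_fact_lemma[of i l]
    by (metis of_nat_fact of_nat_mult)
  have B: "fact j * fact (i - j) * real (i choose j) = fact i" using assms binomial_fact_lemma[of j i]
    by (metis of_nat_fact of_nat_mult)
  have C: "fact j * fact (l - j) * real (l choose j) = fact l" using assms binomial_fact_lemma[of j l]
    by (metis of_nat_fact of_nat_mult le_trans)
  have "(fact j :: real) * (real (l choose i) * real (i choose j) * (fact (i - j) * fact (l - i)))
      = fact i * fact (l - i) * real (l choose i)"
    by (subst B[symmetric]) (simp add: mult_ac)
  also have "\<dots> = fact j * (real (l choose j) * fact (l - j))" using A C by (simp add: mult_ac)
  finally show ?thesis by simp
qed

lemma mi_id:
  assumes "j \<le> i" "i \<le> (l::'d::finite\<Rightarrow>nat)"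
  shows "mi_choose l i * mi_choose i j * (mi_fact (mi_sub i j) * mi_fact (mi_sub l i)) = mi_choose l j * mi_fact (mi_sub l j)"
  unfolding mi_choose_def mi_fact_def mi_sub_def prod.distrib[symmetric]
  by (rule prod.cong[OF refl]) (use assms in \<open>auto simp: le_fun_def coord_id\<close>)

lemma key:
  assumes jl: "j \<le> (l::'d::finite\<Rightarrow>nat)"
  shows "(\<Sum>i\<in>{i. j \<le> i \<and> i \<le> l}. mi_choose l i * mi_choose i j * umb_moment g a (mi_sub i j) * umb_moment g b (mi_sub l i))
     = mi_choose l j * umb_moment g (a + b) (mi_sub l j)"
proof -
  define L where "L = ps_log (\<lambda>u. g u / mi_fact u)"
  define E where "E a = ps_exp (\<lambda>w. a * L w)" for a
  have L0: "L (\<lambda>_. 0) = 0" by (simp add: L_def log0)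
  have m: "umb_moment g a w = mi_fact w * E a w" for a w by (simp add: umb_moment_def E_def L_def)
  have "ps_mult (E a) (E b) (mi_sub l j) = (\<Sum>k\<in>{k. k \<le> mi_sub l j}. E a (mi_sub (\<lambda>i. j i + k i) j) * E b (mi_sub (mi_sub l j) (mi_sub (\<lambda>i. j i + k i) j)))"
    unfolding ps_mult_def sub_add ..
  also have "\<dots> = (\<Sum>i\<in>{i. j \<le> i \<and> i \<le> l}. E a (mi_sub i j) * E b (mi_sub (mi_sub l j) (mi_sub i j)))"
    by (rule reidx[where f="\<lambda>i. E a (mi_sub i j) * E b (mi_sub (mi_sub l j) (mi_sub i j))"]) (rule jl)
  also have "\<dots> = (\<Sum>i\<in>{i. j \<le> i \<and> i \<le> l}. E a (mi_sub i j) * E b (mi_sub l i))"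
    by (rule sum.cong) (auto simp: sub_sub)
  finally have pm: "ps_mult (E a) (E b) (mi_sub l j) = \<dots>" .
  have "(\<Sum>i\<in>{i. j \<le> i \<and> i \<le> l}. mi_choose l i * mi_choose i j * umb_moment g a (mi_sub i j) * umb_moment g b (mi_sub l i))
     = (\<Sum>i\<in>{i. j \<le> i \<and> i \<le> l}. (mi_choose l j * mi_fact (mi_sub l j)) * (E a (mi_sub i j) * E b (mi_sub l i)))"
  proof (rule sum.cong[OF refl])
    fix i assume "i \<in> {i. j \<le> i \<and> i \<le> l}"
    then have "mi_choose l i * mi_choose i j * (mi_fact (mi_sub i j) * mi_fact (mi_sub l i)) = mi_choose l j * mi_fact (mi_sub l j)"
      by (auto intro: mi_id)
    then show "mi_choose l i * mi_choose i j * umb_moment g a (mi_sub i j) * umb_moment g b (mi_sub l i) =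
         (mi_choose l j * mi_fact (mi_sub l j)) * (E a (mi_sub i j) * E b (mi_sub l i))"
      unfolding m by (metis (no_types, lifting) mult.assoc mult.left_commute)
  qed
  also have "\<dots> = mi_choose l j * mi_fact (mi_sub l j) * ps_mult (E a) (E b) (mi_sub l j)"
    by (simp add: pm sum_distrib_left)
  also have "ps_mult (E a) (E b) (mi_sub l j) = E (a + b) (mi_sub l j)"
    unfolding E_def by (rule exp_semigroup[where h=L, OF L0])
  finally show ?thesis by (simp add: m)
qed

lemma pow_split: "mi_pow x k = x d ^ k d * (\<Prod>i\<in>UNIV-{d}. x i ^ k i)"
  unfolding mi_pow_def by (rule prod.remove) auto

lemma sum_split:
  fixes v :: "'d::finite \<Rightarrow> nat"
  shows "(\<Sum>k\<in>{k. k \<le> v}. F k) = (\<Sum>n\<le>v d. \<Sum>k'\<in>{k'. k' \<le> v(d:=0)}. F (k'(d:=n)))"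
proof -
  have "(\<Sum>n\<le>v d. \<Sum>k'\<in>{k'. k' \<le> v(d:=0)}. F (k'(d:=n))) = (\<Sum>(n,k')\<in>{..v d} \<times> {k'. k' \<le> v(d:=0)}. F (k'(d:=n)))"
    by (simp add: sum.cartesian_product)
  also have "\<dots> = (\<Sum>k\<in>{k. k \<le> v}. F k)"
    by (rule sum.reindex_bij_witness[where i="\<lambda>k. (k d, k(d:=0))" and j="\<lambda>(n,k'). k'(d:=n)"])
       (auto simp: le_fun_def fun_eq_iff, metis le_zero_eq, metis)
  finally show ?thesis by simp
qed

lemma uniq_aux:
  fixes D :: "'d::finite set"
  shows "\<forall>v a. (\<forall>i. i \<notin> D \<longrightarrow> v i = 0) \<longrightarrow> (\<forall>x. (\<Sum>k\<in>{k. k \<le> v}. a k * mi_pow x k) = 0) \<longrightarrow> (\<forall>k. k \<le> v \<longrightarrow> a k = 0)"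
proof (induction D rule: finite_induct[OF finite])
  case 1
  show ?case
  proof (intro allI impI)
    fix v :: "'d \<Rightarrow> nat" and a k
    assume "\<forall>i. i \<notin> {} \<longrightarrow> v i = 0" and h: "\<forall>x. (\<Sum>k\<in>{k. k \<le> v}. a k * mi_pow x k) = 0" and k: "k \<le> v"
    then have v0: "v = (\<lambda>_. 0)" by auto
    have "{k. k \<le> v} = {v}" using v0 by (auto simp: le_fun_def)
    moreover have "k = v" using k v0 by (auto simp: le_fun_def)
    ultimately show "a k = 0" using h v0 by (simp add: mi_pow_def)
  qed
next
  case (2 d D)
  show ?case
  proof (intro allI impI)
    fix v :: "'d \<Rightarrow> nat" and a k
    assume supp: "\<forall>i. i \<notin> insert d D \<longrightarrow> v i = 0" and h: "\<forall>x. (\<Sum>k\<in>{k. k \<le> v}. a k * mi_pow x k) = 0" and k: "k \<le> v"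
    define v' where "v' = v(d:=0)"
    define b where "b n x = (\<Sum>k'\<in>{k'. k' \<le> v'}. a (k'(d:=n)) * mi_pow x k')" for n x
    have pk: "mi_pow x k' = (\<Prod>i\<in>UNIV-{d}. x i ^ k' i)" if "k' \<le> v'" for x k'
    proof -
      have "k' d \<le> v' d" using that by (simp add: le_fun_def)
      then have "k' d = 0" by (simp add: v'_def)
      then show ?thesis using pow_split[of x k' d] by simp
    qed
    have bx: "b n (x(d:=y)) = b n x" for n x y
      unfolding b_def by (rule sum.cong[OF refl]) (simp add: pk)
    have coef: "b n x = 0" if n: "n \<le> v d" for n x
    proof -
      have "\<forall>y. (\<Sum>n\<le>v d. b n x * y ^ n) = 0"
      proof
        fix y
        have "(\<Sum>n\<le>v d. b n x * y ^ n) = (\<Sum>n\<le>v d. \<Sum>k'\<in>{k'. k' \<le> v'}. a (k'(d:=n)) * mi_pow (x(d:=y)) (k'(d:=n)))"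
        proof (rule sum.cong[OF refl])
          fix n
          show "b n x * y ^ n = (\<Sum>k'\<in>{k'. k' \<le> v'}. a (k'(d:=n)) * mi_pow (x(d:=y)) (k'(d:=n)))"
            unfolding b_def sum_distrib_right
          proof (rule sum.cong[OF refl])
            fix k' assume "k' \<in> {k'. k' \<le> v'}"
            then have "mi_pow x k' = (\<Prod>i\<in>UNIV-{d}. (x(d:=y)) i ^ (k'(d:=n)) i)"
              by (simp add: pk)
            then show "a (k'(d := n)) * mi_pow x k' * y ^ n = a (k'(d := n)) * mi_pow (x(d := y)) (k'(d := n))"
              using pow_split[of "x(d:=y)" "k'(d:=n)" d] by simp
          qed
        qed
        also have "\<dots> = 0" using h[rule_format, of "x(d:=y)"] unfolding sum_split[of _ v d] v'_def .
        finally show "(\<Sum>n\<le>v d. b n x * y ^ n) = 0" .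
      qed
      then show ?thesis using polyfun_eq_0[of "\<lambda>n. b n x" "v d"] n by auto
    qed
    have v'supp: "\<forall>i. i \<notin> D \<longrightarrow> v' i = 0" using supp by (simp add: v'_def)
    have "k d \<le> v d" using k by (simp add: le_fun_def)
    then have A: "\<forall>x. (\<Sum>k'\<in>{k'. k' \<le> v'}. a (k'(d:=k d)) * mi_pow x k') = 0"
      using coef[of "k d"] by (simp add: b_def)
    have B: "k(d:=0) \<le> v'" using k by (auto simp: v'_def le_fun_def)
    have "a ((k(d:=0))(d := k d)) = 0"
      by (rule "2.IH"[rule_format, of v' "\<lambda>k'. a (k'(d:=k d))", OF _ _ B]) (use v'supp A in auto)
    then show "a k = 0" by simp
  qed
qed

lemma uniq:
  fixes v :: "'d::finite \<Rightarrow> nat"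
  assumes "\<forall>x. (\<Sum>k\<in>{k. k \<le> v}. a k * mi_pow x k) = 0" "k \<le> v"
  shows "a k = 0"
  using uniq_aux[of UNIV] assms by auto

lemma swapS:
  fixes k v :: "'d::finite \<Rightarrow> nat"
  shows "(\<Sum>i\<in>{i. k \<le> i \<and> i \<le> v}. \<Sum>l\<in>{l. i \<le> l \<and> l \<le> v}. f i l)
       = (\<Sum>l\<in>{l. k \<le> l \<and> l \<le> v}. \<Sum>i\<in>{i. k \<le> i \<and> i \<le> l}. f i l)"
proof -
  have "(\<Sum>i\<in>{i. k \<le> i \<and> i \<le> v}. \<Sum>l\<in>{l. i \<le> l \<and> l \<le> v}. f i l)
      = (\<Sum>i\<in>{i. k \<le> i \<and> i \<le> v}. \<Sum>l\<in>{l. l \<in> {l. k \<le> l \<and> l \<le> v} \<and> i \<le> l}. f i l)"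
    by (rule sum.cong[OF refl], rule sum.cong[OF _ refl]) (auto; meson order_trans)
  also have "\<dots> = (\<Sum>l\<in>{l. k \<le> l \<and> l \<le> v}. \<Sum>i\<in>{i. i \<in> {i. k \<le> i \<and> i \<le> v} \<and> i \<le> l}. f i l)"
    by (rule sum.swap_restrict[OF fin_iv fin_iv])
  also have "\<dots> = (\<Sum>l\<in>{l. k \<le> l \<and> l \<le> v}. \<Sum>i\<in>{i. k \<le> i \<and> i \<le> l}. f i l)"
    by (rule sum.cong[OF refl], rule sum.cong[OF _ refl]) (auto; meson order_trans)
  finally show ?thesis .
qed

lemma choose_self: "mi_choose k k = 1"
  by (simp add: mi_choose_def)

lemma sub_self: "mi_sub k k = (\<lambda>_. 0)"
  by (simp add: mi_sub_def)

lemma sub_zero_iff: "k \<le> l \<Longrightarrow> mi_sub l k = (\<lambda>_. 0) \<longleftrightarrow> l = (k::'d \<Rightarrow> nat)"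
  by (auto simp: mi_sub_def le_fun_def fun_eq_iff intro: antisym)

lemma part1:
  fixes g :: "('d::finite \<Rightarrow> nat) \<Rightarrow> real" and v :: "'d \<Rightarrow> nat" and p :: "('d \<Rightarrow> nat) \<Rightarrow> real \<Rightarrow> real"
  shows "tsh g v p \<longleftrightarrow>
            (\<forall>t\<ge>0. \<forall>k. k \<le> v \<longrightarrow>
               p k t = (\<Sum>i\<in>{i. k \<le> i \<and> i \<le> v}.
                          mi_choose i k * p i 0 * umb_moment g (-t) (mi_sub i k)))"
proof
  assume T: "tsh g v p"
  show "\<forall>t\<ge>0. \<forall>k. k \<le> v \<longrightarrow> p k t = (\<Sum>i\<in>{i. k \<le> i \<and> i \<le> v}. mi_choose i k * p i 0 * umb_moment g (-t) (mi_sub i k))"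
  proof (intro allI impI)
    fix t :: real and k assume t: "0 \<le> t" and kv: "k \<le> v"
    have p0: "p i 0 = (\<Sum>l\<in>{l. i \<le> l \<and> l \<le> v}. p l t * mi_choose l i * umb_moment g t (mi_sub l i))"
      if "i \<le> v" for i
    proof -
      have "(\<Sum>l\<in>{l. i \<le> l \<and> l \<le> v}. p l t * mi_choose l i * umb_moment g (t - 0) (mi_sub l i)) = p i 0"
        by (rule T[unfolded tsh_def, rule_format]) (use t that in auto)
      then show ?thesis by simp
    qed
    have "(\<Sum>i\<in>{i. k \<le> i \<and> i \<le> v}. mi_choose i k * p i 0 * umb_moment g (-t) (mi_sub i k))
       = (\<Sum>i\<in>{i. k \<le> i \<and> i \<le> v}. \<Sum>l\<in>{l. i \<le> l \<and> l \<le> v}.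
            p l t * (mi_choose l i * mi_choose i k * umb_moment g (-t) (mi_sub i k) * umb_moment g t (mi_sub l i)))"
    proof (rule sum.cong[OF refl])
      fix i assume "i \<in> {i. k \<le> i \<and> i \<le> v}"
      then have "i \<le> v" by simp
      show "mi_choose i k * p i 0 * umb_moment g (-t) (mi_sub i k) = (\<Sum>l\<in>{l. i \<le> l \<and> l \<le> v}.
            p l t * (mi_choose l i * mi_choose i k * umb_moment g (-t) (mi_sub i k) * umb_moment g t (mi_sub l i)))"
        unfolding p0[OF \<open>i \<le> v\<close>] sum_distrib_left sum_distrib_right
        by (rule sum.cong[OF refl]) (simp add: mult_ac)
    qed
    also have "\<dots> = (\<Sum>l\<in>{l. k \<le> l \<and> l \<le> v}. \<Sum>i\<in>{i. k \<le> i \<and> i \<le> l}.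
            p l t * (mi_choose l i * mi_choose i k * umb_moment g (-t) (mi_sub i k) * umb_moment g t (mi_sub l i)))"
      by (rule swapS)
    also have "\<dots> = (\<Sum>l\<in>{l. k \<le> l \<and> l \<le> v}. p l t * (mi_choose l k * umb_moment g (-t + t) (mi_sub l k)))"
    proof (rule sum.cong[OF refl])
      fix l assume "l \<in> {l. k \<le> l \<and> l \<le> v}"
      then have kl: "k \<le> l" by simp
      show "(\<Sum>i\<in>{i. k \<le> i \<and> i \<le> l}.
            p l t * (mi_choose l i * mi_choose i k * umb_moment g (-t) (mi_sub i k) * umb_moment g t (mi_sub l i)))
          = p l t * (mi_choose l k * umb_moment g (-t + t) (mi_sub l k))"
        unfolding sum_distrib_left[symmetric] key[OF kl] ..
    qed
    also have "\<dots> = (\<Sum>l\<in>{l. k \<le> l \<and> l \<le> v}. if l = k then p k t else 0)"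
      by (rule sum.cong[OF refl]) (auto simp: mom_zero sub_zero_iff choose_self)
    also have "\<dots> = p k t" using kv by (subst sum.delta[OF fin_iv]) simp
    finally show "p k t = (\<Sum>i\<in>{i. k \<le> i \<and> i \<le> v}. mi_choose i k * p i 0 * umb_moment g (-t) (mi_sub i k))" by (rule sym)
  qed
next
  assume F: "\<forall>t\<ge>0. \<forall>k. k \<le> v \<longrightarrow> p k t = (\<Sum>i\<in>{i. k \<le> i \<and> i \<le> v}. mi_choose i k * p i 0 * umb_moment g (-t) (mi_sub i k))"
  show "tsh g v p"
    unfolding tsh_def
  proof (intro allI impI, elim conjE)
    fix s t :: real and j assume s: "0 \<le> s" "s \<le> t" and jv: "j \<le> v"
    have t0: "0 \<le> t" using s by linarith
    have "(\<Sum>k\<in>{k. j \<le> k \<and> k \<le> v}. p k t * mi_choose k j * umb_moment g (t - s) (mi_sub k j))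
       = (\<Sum>k\<in>{k. j \<le> k \<and> k \<le> v}. \<Sum>i\<in>{i. k \<le> i \<and> i \<le> v}.
            p i 0 * (mi_choose i k * mi_choose k j * umb_moment g (t - s) (mi_sub k j) * umb_moment g (-t) (mi_sub i k)))"
    proof (rule sum.cong[OF refl])
      fix k assume "k \<in> {k. j \<le> k \<and> k \<le> v}"
      then have "k \<le> v" by simp
      show "p k t * mi_choose k j * umb_moment g (t - s) (mi_sub k j) = (\<Sum>i\<in>{i. k \<le> i \<and> i \<le> v}.
            p i 0 * (mi_choose i k * mi_choose k j * umb_moment g (t - s) (mi_sub k j) * umb_moment g (-t) (mi_sub i k)))"
        unfolding F[rule_format, OF t0 \<open>k \<le> v\<close>] sum_distrib_left sum_distrib_right
        by (intro sum.cong refl) (simp add: mult_ac)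
    qed
    also have "\<dots> = (\<Sum>i\<in>{i. j \<le> i \<and> i \<le> v}. \<Sum>k\<in>{k. j \<le> k \<and> k \<le> i}.
            p i 0 * (mi_choose i k * mi_choose k j * umb_moment g (t - s) (mi_sub k j) * umb_moment g (-t) (mi_sub i k)))"
      by (rule swapS)
    also have "\<dots> = (\<Sum>i\<in>{i. j \<le> i \<and> i \<le> v}. p i 0 * (mi_choose i j * umb_moment g (t - s + - t) (mi_sub i j)))"
    proof (rule sum.cong[OF refl])
      fix i assume "i \<in> {i. j \<le> i \<and> i \<le> v}"
      then have ji: "j \<le> i" by simp
      show "(\<Sum>k\<in>{k. j \<le> k \<and> k \<le> i}.
            p i 0 * (mi_choose i k * mi_choose k j * umb_moment g (t - s) (mi_sub k j) * umb_moment g (-t) (mi_sub i k)))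
          = p i 0 * (mi_choose i j * umb_moment g (t - s + - t) (mi_sub i j))"
        unfolding sum_distrib_left[symmetric] key[OF ji] ..
    qed
    also have "\<dots> = p j s"
      unfolding F[rule_format, OF s(1) jv] by (intro sum.cong refl) (simp add: mult_ac)
    finally show "(\<Sum>k\<in>{k. j \<le> k \<and> k \<le> v}. p k t * mi_choose k j * umb_moment g (t - s) (mi_sub k j)) = p j s" .
  qed
qed

lemma subsub: "j \<le> k \<Longrightarrow> mi_sub k (mi_sub k j) = (j::'d\<Rightarrow>nat)"
  by (auto simp: mi_sub_def le_fun_def fun_eq_iff)

lemma sub_le: "mi_sub k j \<le> (k::'d\<Rightarrow>nat)"
  by (auto simp: mi_sub_def le_fun_def)

lemma choose_sym: "j \<le> k \<Longrightarrow> mi_choose k (mi_sub k j) = mi_choose k (j::'d::finite\<Rightarrow>nat)"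
  unfolding mi_choose_def mi_sub_def
  by (rule prod.cong[OF refl]) (metis binomial_symmetric le_fun_def)

lemma Q_alt: "Q_poly g k x t = (\<Sum>j\<in>{j. j \<le> k}. mi_choose k j * mi_pow x j * umb_moment g (-t) (mi_sub k j))"
  unfolding Q_poly_def
  by (rule sum.reindex_bij_witness[where i="\<lambda>j. mi_sub k j" and j="\<lambda>i. mi_sub k i"])
     (auto simp: subsub sub_le choose_sym)

lemma R:
  fixes v :: "'d::finite \<Rightarrow> nat"
  shows "(\<Sum>k\<in>{k. k \<le> v}. p k 0 * Q_poly g k x t)
     = (\<Sum>j\<in>{j. j \<le> v}. (\<Sum>i\<in>{i. j \<le> i \<and> i \<le> v}. mi_choose i j * p i 0 * umb_moment g (-t) (mi_sub i j)) * mi_pow x j)"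
proof -
  have "(\<Sum>k\<in>{k. k \<le> v}. p k 0 * Q_poly g k x t)
     = (\<Sum>k\<in>{k. k \<le> v}. \<Sum>j\<in>{j. j \<in> {j. j \<le> v} \<and> j \<le> k}. mi_choose k j * p k 0 * umb_moment g (-t) (mi_sub k j) * mi_pow x j)"
  proof (rule sum.cong[OF refl])
    fix k assume "k \<in> {k. k \<le> v}"
    then have "{j. j \<in> {j. j \<le> v} \<and> j \<le> k} = {j. j \<le> k}" by (auto intro: order_trans)
    then show "p k 0 * Q_poly g k x t = (\<Sum>j\<in>{j. j \<in> {j. j \<le> v} \<and> j \<le> k}. mi_choose k j * p k 0 * umb_moment g (-t) (mi_sub k j) * mi_pow x j)"
      unfolding Q_alt sum_distrib_left by (simp add: mult_ac)
  qed
  also have "\<dots> = (\<Sum>j\<in>{j. j \<le> v}. \<Sum>k\<in>{k. k \<in> {k. k \<le> v} \<and> j \<le> k}. mi_choose k j * p k 0 * umb_moment g (-t) (mi_sub k j) * mi_pow x j)"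
    by (rule sum.swap_restrict[OF fin_le fin_le])
  also have "\<dots> = (\<Sum>j\<in>{j. j \<le> v}. (\<Sum>i\<in>{i. j \<le> i \<and> i \<le> v}. mi_choose i j * p i 0 * umb_moment g (-t) (mi_sub i j)) * mi_pow x j)"
    unfolding sum_distrib_right by (rule sum.cong[OF refl], rule sum.cong) auto
  finally show ?thesis .
qed

theorem mainTheorem6:
  fixes g :: "('d::finite \<Rightarrow> nat) \<Rightarrow> real"
    and v :: "'d \<Rightarrow> nat"
    and p :: "('d \<Rightarrow> nat) \<Rightarrow> real \<Rightarrow> real"
  assumes g0: "g (\<lambda>_. 0) = 1"
  shows "(tsh g v p \<longleftrightarrow>
            (\<forall>t\<ge>0. \<forall>k. k \<le> v \<longrightarrow>
               p k t = (\<Sum>i\<in>{i. k \<le> i \<and> i \<le> v}.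
                          mi_choose i k * p i 0 * umb_moment g (-t) (mi_sub i k))))
       \<and> (tsh g v p \<longleftrightarrow>
            (\<forall>t\<ge>0. \<forall>x. P_poly v p x t = (\<Sum>k\<in>{k. k \<le> v}. p k 0 * Q_poly g k x t)))"
proof -
  define c where "c k t = (\<Sum>i\<in>{i. k \<le> i \<and> i \<le> v}. mi_choose i k * p i 0 * umb_moment g (-t) (mi_sub i k))" for k t
  have eq: "(\<forall>x. P_poly v p x t = (\<Sum>k\<in>{k. k \<le> v}. p k 0 * Q_poly g k x t)) \<longleftrightarrow> (\<forall>k. k \<le> v \<longrightarrow> p k t = c k t)" for t
  proof
    assume H: "\<forall>x. P_poly v p x t = (\<Sum>k\<in>{k. k \<le> v}. p k 0 * Q_poly g k x t)"
    have Z: "\<forall>x. (\<Sum>k\<in>{k. k \<le> v}. (p k t - c k t) * mi_pow x k) = 0"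
    proof
      fix x
      have "(\<Sum>k\<in>{k. k \<le> v}. (p k t - c k t) * mi_pow x k) = P_poly v p x t - (\<Sum>k\<in>{k. k \<le> v}. p k 0 * Q_poly g k x t)"
        unfolding R c_def P_poly_def by (simp add: left_diff_distrib sum_subtractf)
      then show "(\<Sum>k\<in>{k. k \<le> v}. (p k t - c k t) * mi_pow x k) = 0" using H by simp
    qed
    show "\<forall>k. k \<le> v \<longrightarrow> p k t = c k t"
      using uniq[OF Z] by auto
  next
    assume H: "\<forall>k. k \<le> v \<longrightarrow> p k t = c k t"
    show "\<forall>x. P_poly v p x t = (\<Sum>k\<in>{k. k \<le> v}. p k 0 * Q_poly g k x t)"
      unfolding R P_poly_def using H by (auto simp: c_def intro!: sum.cong)
  qed
  have p1: "tsh g v p \<longleftrightarrow> (\<forall>t\<ge>0. \<forall>k. k \<le> v \<longrightarrow> p k t = c k t)"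
    unfolding c_def by (rule part1)
  show ?thesis unfolding p1 eq c_def by simp
qed

end
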